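(* Assume $W$ satisfies (h) and (h* ) as in the context, and let \[ c^*:=\sup\Big\{c>0:\ \text{there exists } L\ge1 \text{ with } \inf_{V\in\mathcal{X}_L}E_c(V)<0\Big\} \] (the speed of the heteroclinic travelling wave $U_{xx}-\nabla W(U)=-cU_x$, $U(\pm\infty)=a^\pm$). Then \[ c^*=\sup\Big\{c>0:\ \inf_{V\in\mathcal{X}}E_c(V)<0\Big\},\qquad \mathcal{X}:=\{V\in[H^1_{\mathrm{loc}}(\mathbb{R})]^N: V(\pm\infty)=a^\pm\}. \]
   Context: $W\in C^2_{\mathrm{loc}}(\mathbb{R}^N)$. Hypothesis (h* ): $a^\pm$ are minima, $W(a^-)<0=W(a^+)$, $\min W=W(a^-)$; there is $\alpha_0>0$ such that for every $\alpha\in(0,\alpha_0]$, $W^{-1}(\{\alpha\})=\partial\mathcal{C}^-_\alpha\cup\partial\mathcal{C}^+_\alpha$, $\{W\le\alpha\}=\mathcal{C}^-_\alpha\cup\mathcal{C}^+_\alpha$, with $\mathcal{C}^\pm_\alpha$ disjoint compact convex sets with $C^2$ boundaries containing $a^\pm$; with $\mathcal{C}^-_0$ the component of $\{W\le0\}$ containing $a^-$ and $n$ its outward normal, $\nabla W\cdot n\ge c_0>0$ and $D^2W\ge c_0I$ on $\partial\mathcal{C}^-_0$; and $r\mapsto W(a^-+r\xi)$ has strictly positive derivative for $r>0$ while $a^-+r\xi\in\mathcal{C}^-_{\alpha_0}$, $|\xi|=1$. Hypothesis (h): there is $R_0>0$ with $\frac{d}{dr}W(a^\pm+r\xi)>0$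 for $r\in(0,R_0)$, $|\xi|=1$. $r_0\in(0,R_0)$ with $W\ge0$ on $\{|u-a^+|\le r_0\}$, $W<0$ on $\{|u-a^-|\le r_0\}$. $E_c(U):=\int_{\mathbb{R}}(\tfrac12|U_x|^2+W(U))e^{cx}dx$; $\mathcal{X}_L:=\{U\in[H^1_{\mathrm{loc}}(\mathbb{R})]^N: |U(x)-a^+|\le r_0\ (x\ge L),\ |U(x)-a^-|\le r_0\ (x\le-L)\}$. *)

theory Defs
  imports "HOL-Analysis.Analysis"
begin

definition C2_on :: "'a set \<Rightarrow> ('a::euclidean_space \<Rightarrow> real) \<Rightarrow> ('a \<Rightarrow> 'a) \<Rightarrow> ('a \<Rightarrow> 'a \<Rightarrow>\<^sub>L 'a) \<Rightarrow> bool" where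
  "C2_on S f G H \<longleftrightarrow>
     (\<forall>x\<in>S. (f has_derivative (\<lambda>h. G x \<bullet> h)) (at x) \<and>
             (G has_derivative (\<lambda>h. blinfun_apply (H x) h)) (at x)) \<and> continuous_on S H"

definition C2_defining_fn :: "'a::euclidean_space set \<Rightarrow> 'a \<Rightarrow> 'a set \<Rightarrow> ('a \<Rightarrow> real) \<Rightarrow> ('a \<Rightarrow> 'a) \<Rightarrow> bool" where
  "C2_defining_fn S p U \<phi> G \<longleftrightarrow> open U \<and> p \<in> U \<and> (\<exists>H. C2_on U \<phi> G H) \<and> G p \<noteq> 0 \<and>
     S \<inter> U = {x\<in>U. \<phi> x \<le> 0}"

definition C2_boundary :: "'a::euclidean_space set \<Rightarrow> bool" where
  "C2_boundary S \<longleftrightarrow> (\<forall>p\<in>frontier S. \<exists>U \<phi> G. C2_defining_fn S p U \<phi> G)"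

definition outward_normal :: "'a::euclidean_space set \<Rightarrow> 'a \<Rightarrow> 'a \<Rightarrow> bool" where
  "outward_normal S p n \<longleftrightarrow> p \<in> frontier S \<and>
     (\<exists>U \<phi> G. C2_defining_fn S p U \<phi> G \<and> n = (1 / norm (G p)) *\<^sub>R G p)"

text \<open>U' is a weak derivative of U (U the continuous representative of an H^1_loc function).\<close>
definition weak_deriv :: "(real \<Rightarrow> 'a::euclidean_space) \<Rightarrow> (real \<Rightarrow> 'a) \<Rightarrow> bool" where
  "weak_deriv U U' \<longleftrightarrow> (\<forall>a b. a \<le> b \<longrightarrow>
      U' absolutely_integrable_on {a..b} \<and>
      (\<lambda>x. (norm (U' x))\<^sup>2) integrable_on {a..b} \<and>
      (U' has_integral (U b - U a)) {a..b})"

definition H1loc :: "(real \<Rightarrow> 'a::euclidean_space) \<Rightarrow> bool" where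
  "H1loc U \<longleftrightarrow> (\<exists>U'. weak_deriv U U')"

definition energy :: "('a::euclidean_space \<Rightarrow> real) \<Rightarrow> real \<Rightarrow> (real \<Rightarrow> 'a) \<Rightarrow> (real \<Rightarrow> 'a) \<Rightarrow> ereal" where
  "energy W c U U' =
     (let f = (\<lambda>x. (1/2 * (norm (U' x))\<^sup>2 + W (U x)) * exp (c * x)) in
      enn2ereal (\<integral>\<^sup>+ x. ennreal (f x) \<partial>lborel) - enn2ereal (\<integral>\<^sup>+ x. ennreal (- f x) \<partial>lborel))"

definition energies :: "('a::euclidean_space \<Rightarrow> real) \<Rightarrow> real \<Rightarrow> (real \<Rightarrow> 'a) set \<Rightarrow> ereal set" where
  "energies W c A = {energy W c U U' | U U'. U \<in> A \<and> weak_deriv U U'}"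

definition XL :: "'a::euclidean_space \<Rightarrow> 'a \<Rightarrow> real \<Rightarrow> real \<Rightarrow> (real \<Rightarrow> 'a) set" where
  "XL am ap r0 L = {U. H1loc U \<and> (\<forall>x\<ge>L. norm (U x - ap) \<le> r0) \<and> (\<forall>x\<le>-L. norm (U x - am) \<le> r0)}"

definition Xinf :: "'a::euclidean_space \<Rightarrow> 'a \<Rightarrow> (real \<Rightarrow> 'a) set" where
  "Xinf am ap = {U. H1loc U \<and> (U \<longlongrightarrow> ap) at_top \<and> (U \<longlongrightarrow> am) at_bot}"

end

theory Submission
  imports Defs "HOL-Real_Asymp.Real_Asymp"
begin


lemma W_cont: assumes "C2_on UNIV W G H" shows "continuous_on UNIV W"
  using assms unfolding C2_on_def
  by (meson continuous_at_imp_continuous_on has_derivative_continuous UNIV_I)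

lemma wd_props: assumes "weak_deriv U U'" "a \<le> b"
  shows "U' absolutely_integrable_on {a..b}" "(\<lambda>x. (norm (U' x))\<^sup>2) integrable_on {a..b}"
    "(U' has_integral (U b - U a)) {a..b}"
  using assms unfolding weak_deriv_def by auto

lemma wd_cont: assumes "weak_deriv U U'" shows "continuous_on UNIV U"
proof -
  have "isCont U x" for x
  proof -
    define a where "a = x - 1"
    define b where "b = x + 1"
    have ab: "a \<le> b" unfolding a_def b_def by simp
    have int: "U' integrable_on {a..b}"
      using wd_props(1)[OF assms ab] absolutely_integrable_on_def by blast
    have eq: "U y = U a + integral {a..y} U'" if "y \<in> {a..b}" for y
    proof -
      have "(U' has_integral (U y - U a)) {a..y}" using wd_props(3)[OF assms] that by auto
      then show ?thesis by (simp add: integral_unique)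
    qed
    have "continuous_on {a..b} (\<lambda>y. U a + integral {a..y} U')"
      using indefinite_integral_continuous_1[OF int] by (intro continuous_intros)
    then have "continuous_on {a..b} U" using continuous_on_cong eq by (metis (no_types, lifting))
    moreover have "x \<in> interior {a..b}" unfolding a_def b_def by simp
    ultimately show ?thesis using continuous_on_interior by blast
  qed
  then show ?thesis by (simp add: continuous_at_imp_continuous_on)
qed

lemma wd_meas: assumes "weak_deriv U U'" shows "U' \<in> borel_measurable lebesgue"
proof -
  have meas: "(\<lambda>x. if x \<in> {-real n..real n} then U' x else 0) measurable_on UNIV" for n
  proof -
    have "U' integrable_on {-real n..real n}"
      using wd_props(1)[OF assms, of "-real n" "real n"] absolutely_integrable_on_def by auto
    then have "U' \<in> borel_measurable (lebesgue_on {-real n..real n})" by (rule integrable_imp_measurable)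
    then have "U' measurable_on {-real n..real n}" by (subst measurable_on_iff_borel_measurable) auto
    then show ?thesis unfolding measurable_on_UNIV .
  qed
  have lim: "(\<lambda>n. if x \<in> {-real n..real n} then U' x else 0) \<longlonglongrightarrow> U' x" if "x \<in> UNIV - {}" for x
  proof (rule tendsto_eventually)
    show "\<forall>\<^sub>F n in sequentially. (if x \<in> {- real n..real n} then U' x else 0) = U' x"
      unfolding eventually_sequentially
    proof (rule exI[of _ "nat \<lceil>\<bar>x\<bar>\<rceil>"], intro allI impI)
      fix n assume "n \<ge> nat \<lceil>\<bar>x\<bar>\<rceil>"
      then have "real (nat \<lceil>\<bar>x\<bar>\<rceil>) \<le> real n" by linarith
      then have "\<bar>x\<bar> \<le> real n" using real_nat_ceiling_ge[of "\<bar>x\<bar>"] by linarith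
      then show "(if x \<in> {- real n..real n} then U' x else 0) = U' x" by auto
    qed
  qed
  have "U' measurable_on UNIV"
    by (rule measurable_on_limit[OF meas negligible_empty lim])
  then show ?thesis by (rule measurable_on_imp_borel_measurable_lebesgue_UNIV)
qed

definition ig where "ig W c U U' x = (1/2 * (norm (U' x))\<^sup>2 + W (U x)) * exp (c * x)"

lemma energy_ig: "energy W c U U' = enn2ereal (\<integral>\<^sup>+ x. ennreal (ig W c U U' x) \<partial>lborel) - enn2ereal (\<integral>\<^sup>+ x. ennreal (- ig W c U U' x) \<partial>lborel)"
  unfolding energy_def ig_def Let_def by simp

lemma ig_meas: assumes "weak_deriv U U'" "continuous_on UNIV W"
  shows "ig W c U U' \<in> borel_measurable lebesgue"
proof -
  have [measurable]: "U' \<in> borel_measurable lebesgue" using wd_meas[OF assms(1)] .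
  have "continuous_on UNIV (\<lambda>x. W (U x))"
    using continuous_on_compose2[OF assms(2) wd_cont[OF assms(1)]] by auto
  then have [measurable]: "(\<lambda>x. W (U x)) \<in> borel_measurable lebesgue"
    using continuous_imp_measurable_on_sets_lebesgue[of UNIV] lebesgue_on_UNIV_eq by fastforce
  have "continuous_on UNIV (\<lambda>x::real. exp (c * x))" by (intro continuous_intros)
  then have [measurable]: "(\<lambda>x::real. exp (c * x)) \<in> borel_measurable lebesgue"
    using continuous_imp_measurable_on_sets_lebesgue[of UNIV] lebesgue_on_UNIV_eq by fastforce
  have [measurable]: "(\<lambda>x. norm (U' x)) \<in> borel_measurable lebesgue"
    using measurable_compose[OF _ borel_measurable_norm] by fastforce
  have m1: "(\<lambda>x. (norm (U' x))\<^sup>2) \<in> borel_measurable lebesgue"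
    by (rule borel_measurable_power) fact
  have m2: "(\<lambda>x. 1/2 * (norm (U' x))\<^sup>2 + W (U x)) \<in> borel_measurable lebesgue"
    by (rule borel_measurable_add[OF borel_measurable_times[OF borel_measurable_const m1]]) fact
  show ?thesis unfolding ig_def
    by (rule borel_measurable_times[OF m2]) fact
qed

lemma nn_le_lemma:
  fixes u v h :: "real \<Rightarrow> real"
  assumes v: "v \<in> borel_measurable lebesgue" and h: "h \<in> borel_measurable borel"
    and hnn: "\<And>x. 0 \<le> h x" and l: "0 \<le> l"
    and le: "\<And>x. u x \<le> l * max (v x) 0 + h x"
  shows "(\<integral>\<^sup>+x. ennreal (u x) \<partial>lborel) \<le> ennreal l * (\<integral>\<^sup>+x. ennreal (v x) \<partial>lborel) + (\<integral>\<^sup>+x. ennreal (h x) \<partial>lborel)"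
proof -
  obtain v' where v'm: "v' \<in> borel_measurable lborel" and ae: "AE x in lborel. v x = v' x"
    using completion_ex_borel_measurable_real[OF v] by blast
  have "(\<integral>\<^sup>+x. ennreal (u x) \<partial>lborel) \<le> (\<integral>\<^sup>+x. ennreal l * ennreal (v' x) + ennreal (h x) \<partial>lborel)"
  proof (rule nn_integral_mono_AE)
    show "AE x in lborel. ennreal (u x) \<le> ennreal l * ennreal (v' x) + ennreal (h x)"
      using ae
    proof eventually_elim
      fix x assume vx: "v x = v' x"
      have "ennreal (u x) \<le> ennreal (l * max (v x) 0 + h x)" using le by (intro ennreal_leI) auto
      also have "\<dots> = ennreal l * ennreal (v x) + ennreal (h x)"
        using l hnn[of x] by (simp add: ennreal_plus ennreal_mult max_def ennreal_neg)
      finally show "ennreal (u x) \<le> ennreal l * ennreal (v' x) + ennreal (h x)" using vx by simp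
    qed
  qed
  also have "\<dots> = ennreal l * (\<integral>\<^sup>+x. ennreal (v' x) \<partial>lborel) + (\<integral>\<^sup>+x. ennreal (h x) \<partial>lborel)"
    using v'm h by (simp add: nn_integral_add nn_integral_cmult)
  also have "(\<integral>\<^sup>+x. ennreal (v' x) \<partial>lborel) = (\<integral>\<^sup>+x. ennreal (v x) \<partial>lborel)"
    using ae by (intro nn_integral_cong_AE) auto
  finally show ?thesis .
qed



definition wd_on :: "real set \<Rightarrow> (real \<Rightarrow> 'a::euclidean_space) \<Rightarrow> (real \<Rightarrow> 'a) \<Rightarrow> bool" where
 "wd_on S U U' \<longleftrightarrow> (\<forall>a b. a \<le> b \<longrightarrow> {a..b} \<subseteq> S \<longrightarrow> U' absolutely_integrable_on {a..b} \<and>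
    (\<lambda>x. (norm (U' x))\<^sup>2) integrable_on {a..b} \<and> (U' has_integral (U b - U a)) {a..b})"

lemma wd_on_UNIV: "weak_deriv U U' \<longleftrightarrow> wd_on UNIV U U'"
  unfolding weak_deriv_def wd_on_def by auto

lemma wd_on_cong: "wd_on S U V \<Longrightarrow> (\<And>x. x \<in> S \<Longrightarrow> U2 x = U x) \<Longrightarrow> wd_on S U2 V"
  unfolding wd_on_def by (metis atLeastAtMost_iff order_refl subset_iff)

lemma wd_on_mono: "wd_on S U V \<Longrightarrow> T \<subseteq> S \<Longrightarrow> wd_on T U V"
  unfolding wd_on_def by blast

lemma wd_on_const: "(\<And>x. x \<in> S \<Longrightarrow> U x = k) \<Longrightarrow> wd_on S U (\<lambda>x. 0)"
  unfolding wd_on_def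
proof (intro allI impI conjI)
  fix a b assume U: "\<And>x. x \<in> S \<Longrightarrow> U x = k" and ab: "a \<le> b" "{a..b} \<subseteq> S"
  then have "a \<in> S" "b \<in> S" by auto
  then have "U b - U a = 0" using U by auto
  then show "((\<lambda>x. 0) has_integral (U b - U a)) {a..b}" by simp
qed auto

lemma wd_on_lin: "(\<And>x. x \<in> S \<Longrightarrow> U x = p + x *\<^sub>R d) \<Longrightarrow> wd_on S U (\<lambda>x. d)"
  unfolding wd_on_def
proof (intro allI impI conjI)
  fix a b assume U: "\<And>x. x \<in> S \<Longrightarrow> U x = p + x *\<^sub>R d" and ab: "a \<le> b" "{a..b} \<subseteq> S"
  then have "a \<in> S" "b \<in> S" by auto
  then have "U b - U a = (b - a) *\<^sub>R d" using U by (auto simp: algebra_simps)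
  then show "((\<lambda>x. d) has_integral (U b - U a)) {a..b}" using ab has_integral_const_real[of d a b] by simp
qed auto

lemma props_spike:
  fixes V U' :: "real \<Rightarrow> 'a::euclidean_space"
  assumes "V absolutely_integrable_on {a..b}" "(\<lambda>x. (norm (V x))\<^sup>2) integrable_on {a..b}"
    "(V has_integral I) {a..b}" and F: "finite F" and eq: "\<And>x. x \<in> {a..b} - F \<Longrightarrow> U' x = V x"
  shows "U' absolutely_integrable_on {a..b}" "(\<lambda>x. (norm (U' x))\<^sup>2) integrable_on {a..b}"
    "(U' has_integral I) {a..b}"
proof -
  show "U' absolutely_integrable_on {a..b}"
    using absolutely_integrable_spike[where f=V and T="{a..b}" and S=F and g=U'] assms(1) negligible_finite[OF F] eq by blast
  show "(\<lambda>x. (norm (U' x))\<^sup>2) integrable_on {a..b}"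
    by (rule integrable_spike_finite[OF F _ assms(2)]) (use eq in auto)
  show "(U' has_integral I) {a..b}"
    using has_integral_spike_finite_eq[OF F, of "{a..b}" U' V I] eq assms(3) by auto
qed

lemma wd_glue:
  assumes A1: "wd_on (S \<inter> {..s}) U V1" and A2: "wd_on (S \<inter> {s..}) U V2"
    and E1: "\<And>x. x < s \<Longrightarrow> U' x = V1 x" and E2: "\<And>x. x > s \<Longrightarrow> U' x = V2 x"
  shows "wd_on S U U'"
  unfolding wd_on_def
proof (intro allI impI)
  fix a b assume ab: "a \<le> b" "{a..b} \<subseteq> S"
  have L: "U' absolutely_integrable_on {a..c} \<and> (\<lambda>x. (norm (U' x))\<^sup>2) integrable_on {a..c} \<and>
      (U' has_integral (U c - U a)) {a..c}" if "a \<le> c" "c \<le> s" "{a..c} \<subseteq> S" for a c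
  proof -
    have "{a..c} \<subseteq> S \<inter> {..s}" using that by auto
    then have P: "V1 absolutely_integrable_on {a..c}" "(\<lambda>x. (norm (V1 x))\<^sup>2) integrable_on {a..c}"
      "(V1 has_integral (U c - U a)) {a..c}" using A1 that unfolding wd_on_def by blast+
    have eq: "\<And>x. x \<in> {a..c} - {s} \<Longrightarrow> U' x = V1 x" using E1 that by auto
    show ?thesis using props_spike[OF P, of "{s}"] eq by simp
  qed
  have R: "U' absolutely_integrable_on {c..b} \<and> (\<lambda>x. (norm (U' x))\<^sup>2) integrable_on {c..b} \<and>
      (U' has_integral (U b - U c)) {c..b}" if "c \<le> b" "s \<le> c" "{c..b} \<subseteq> S" for b c
  proof -
    have "{c..b} \<subseteq> S \<inter> {s..}" using that by auto
    then have P: "V2 absolutely_integrable_on {c..b}" "(\<lambda>x. (norm (V2 x))\<^sup>2) integrable_on {c..b}"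
      "(V2 has_integral (U b - U c)) {c..b}" using A2 that unfolding wd_on_def by blast+
    have eq: "\<And>x. x \<in> {c..b} - {s} \<Longrightarrow> U' x = V2 x" using E2 that by auto
    show ?thesis using props_spike[OF P, of "{s}"] eq by simp
  qed
  show "U' absolutely_integrable_on {a..b} \<and> (\<lambda>x. (norm (U' x))\<^sup>2) integrable_on {a..b} \<and>
      (U' has_integral (U b - U a)) {a..b}"
  proof (cases "b \<le> s")
    case True then show ?thesis using L[OF ab(1) True ab(2)] by simp
  next
    case F1: False
    show ?thesis
    proof (cases "s \<le> a")
      case True then show ?thesis using R[OF ab(1) True ab(2)] by simp
    next
      case False
      then have as: "a \<le> s" "s \<le> b" using F1 by auto
      have s1: "{a..s} \<subseteq> S" "{s..b} \<subseteq> S" using ab as by auto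
      note l = L[OF as(1) order_refl s1(1)] and r = R[OF as(2) order_refl s1(2)]
      have "U' absolutely_integrable_on {a..b}"
        using absolutely_integrable_on_combine[where f=U' and a=a and c=s and b=b] l r as by blast
      moreover have "(\<lambda>x. (norm (U' x))\<^sup>2) integrable_on {a..b}"
        using Henstock_Kurzweil_Integration.integrable_combine[where a=a and c=s and b=b and f="\<lambda>x. (norm (U' x))\<^sup>2"] l r as by blast
      moreover have "(U' has_integral ((U s - U a) + (U b - U s))) {a..b}"
        using has_integral_combine[OF as] l r by blast
      ultimately show ?thesis by simp
    qed
  qed
qed



lemma g0: assumes "(c::real) > 0" shows "((\<lambda>T. B * exp (-(c*T/2))) \<longlongrightarrow> 0) at_top"
  using assms by real_asymp

lemma conv_from_bound:
  fixes U :: "real \<Rightarrow> 'a::euclidean_space"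
  assumes c: "c > 0" and Bd: "\<And>T y. M \<le> T \<Longrightarrow> T \<le> y \<Longrightarrow> dist (U y) (U T) \<le> B * exp (-(c*T/2))"
  shows "\<exists>p. (U \<longlongrightarrow> p) at_top"
proof -
  define s where "s n = U (real n)" for n
  have G: "((\<lambda>T. B * exp (-(c*T/2))) \<longlongrightarrow> 0) at_top" using g0[OF c] .
  have "Cauchy s"
  proof (rule metric_CauchyI)
    fix e::real assume e: "e > 0"
    have "\<forall>\<^sub>F T in at_top. B * exp (-(c*T/2)) < e" using order_tendstoD(2)[OF G e] .
    then obtain N0 where N0: "\<And>T. T \<ge> N0 \<Longrightarrow> B * exp (-(c*T/2)) < e"
      unfolding eventually_at_top_linorder by blast
    define N where "N = nat \<lceil>max M N0\<rceil>"
    have key: "dist (s m) (s n) < e" if "m \<ge> N" "n \<ge> N" "m \<le> n" for m n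
    proof -
      have "max M N0 \<le> real m" using that(1) unfolding N_def by linarith
      then have "dist (U (real n)) (U (real m)) \<le> B * exp (-(c*real m/2))" "B * exp (-(c*real m/2)) < e"
        using Bd[of "real m" "real n"] N0[of "real m"] that by auto
      then show ?thesis unfolding s_def by (simp add: dist_commute)
    qed
    show "\<exists>N. \<forall>m\<ge>N. \<forall>n\<ge>N. dist (s m) (s n) < e"
    proof (intro exI allI impI)
      fix m n assume "N \<le> m" "N \<le> n"
      then show "dist (s m) (s n) < e"
        using key[of m n] key[of n m] by (cases "m \<le> n") (auto simp: dist_commute)
    qed
  qed
  then obtain p where p: "s \<longlonglongrightarrow> p" using Cauchy_convergent_iff convergent_def by blast
  have le: "dist (U x) p \<le> B * exp (-(c*x/2))" if "x \<ge> M" for x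
  proof -
    have "(\<lambda>n. dist (U x) (s n)) \<longlonglongrightarrow> dist (U x) p" by (intro tendsto_intros p)
    moreover have "\<exists>N. \<forall>n\<ge>N. dist (U x) (s n) \<le> B * exp (-(c*x/2))"
    proof (intro exI allI impI)
      fix n assume "nat \<lceil>x\<rceil> \<le> n"
      then have "x \<le> real n" by linarith
      then show "dist (U x) (s n) \<le> B * exp (-(c*x/2))"
        using Bd[of x "real n"] that unfolding s_def by (simp add: dist_commute)
    qed
    ultimately show ?thesis by (rule LIMSEQ_le_const2)
  qed
  have "((\<lambda>x. U x - p) \<longlongrightarrow> 0) at_top"
  proof (rule Lim_null_comparison[OF _ G])
    show "\<forall>\<^sub>F x in at_top. norm (U x - p) \<le> B * exp (- (c * x / 2))"
      unfolding eventually_at_top_linorder using le by (auto simp: dist_norm)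
  qed
  then show ?thesis using LIM_zero_cancel by blast
qed

lemma amgm: assumes "q > (0::real)" shows "a \<le> q * a\<^sup>2 / 2 + 1 / (2 * q)"
proof -
  have "0 \<le> (q*a - 1)\<^sup>2" by simp
  then have "0 \<le> q\<^sup>2 * a\<^sup>2 - 2*q*a + 1" by (simp add: power2_eq_square algebra_simps)
  then have "2*q*a \<le> q\<^sup>2 * a\<^sup>2 + 1" by linarith
  then have "(2*q*a) / (2*q) \<le> (q\<^sup>2 * a\<^sup>2 + 1) / (2*q)" using assms by (intro divide_right_mono) auto
  also have "(2*q*a) / (2*q) = a" using assms by simp
  also have "(q\<^sup>2 * a\<^sup>2 + 1) / (2*q) = q * a\<^sup>2 / 2 + 1 / (2 * q)" using assms
    by (simp add: field_simps power2_eq_square)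
  finally show ?thesis .
qed

lemma exp_int: fixes T y c k :: real assumes "T \<le> y" "c > 0" "k > 0"
  shows "((\<lambda>x. exp (-(c*x)) / k) has_integral ((exp (-(c*T)) - exp (-(c*y))) / (k*c))) {T..y}"
proof -
  have "((\<lambda>x. exp (-(c*x)) / k) has_integral ((- exp (-(c*y)) / (k*c)) - (- exp (-(c*T)) / (k*c)))) {T..y}"
  proof (rule fundamental_theorem_of_calculus[OF assms(1), where f="\<lambda>x. - exp (-(c*x)) / (k*c)"])
    fix x assume "x \<in> {T..y}"
    have "((\<lambda>x. - exp (-(c*x)) / (k*c)) has_real_derivative (- (exp (-(c*x)) * (- c)) / (k*c))) (at x)"
      using assms by (intro derivative_eq_intros) auto
    then show "((\<lambda>x. - exp (-(c*x)) / (k*c)) has_vector_derivative exp (-(c*x)) / k) (at x within {T..y})"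
      using assms by (auto simp: has_real_derivative_iff_has_vector_derivative intro: has_vector_derivative_at_within)
  qed
  then show ?thesis by (simp add: diff_divide_distrib)
qed



lemma tail_bound:
  fixes U U' :: "real \<Rightarrow> 'a::euclidean_space" and W :: "'a \<Rightarrow> real"
  assumes wd: "weak_deriv U U'" and Wc: "continuous_on UNIV W" and c: "c > 0"
    and nonneg: "\<And>x. x \<ge> L \<Longrightarrow> W (U x) \<ge> 0"
    and P: "(\<integral>\<^sup>+x. ennreal (ig W c U U' x) \<partial>lborel) = ennreal P" and P0: "P \<ge> 0"
    and T: "L \<le> T" "T \<le> y"
  shows "norm (U y - U T) \<le> exp (-(c*T/2)) * (P + 1/(2*c))"
proof -
  define l where "l = exp (-(c*T/2))"
  have l0: "l > 0" unfolding l_def by simp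
  have hi: "(U' has_integral (U y - U T)) {T..y}" using wd_props(3)[OF wd T(2)] .
  have ai: "U' absolutely_integrable_on {T..y}" using wd_props(1)[OF wd T(2)] .
  then have ni: "(\<lambda>x. norm (U' x)) integrable_on {T..y}" and ui: "U' integrable_on {T..y}"
    by (auto simp: absolutely_integrable_on_def)
  define I where "I = integral {T..y} (\<lambda>x. norm (U' x))"
  have n1: "norm (U y - U T) \<le> I"
    using Henstock_Kurzweil_Integration.integral_norm_bound_integral[OF ui ni] hi unfolding I_def
    by (simp add: integral_unique)
  have I0: "I \<ge> 0" unfolding I_def by (rule integral_nonneg[OF ni]) auto
  have "(\<integral>\<^sup>+x. ennreal (norm (U' x)) * indicator {T..y} x \<partial>lborel) = ennreal I"
    unfolding I_def by (rule nn_integral_has_integral_lebesgue') (auto intro: integrable_integral ni)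
  moreover have "(\<integral>\<^sup>+x. ennreal (norm (U' x) * indicator {T..y} x) \<partial>lborel)
      = (\<integral>\<^sup>+x. ennreal (norm (U' x)) * indicator {T..y} x \<partial>lborel)"
    by (intro nn_integral_cong) (auto simp: indicator_def)
  ultimately have u_int: "(\<integral>\<^sup>+x. ennreal (norm (U' x) * indicator {T..y} x) \<partial>lborel) = ennreal I" by simp
  define E where "E = (exp (-(c*T)) - exp (-(c*y))) / ((2*l)*c)"
  have ex: "((\<lambda>x. exp (-(c*x)) / (2*l)) has_integral E) {T..y}"
    unfolding E_def by (rule exp_int) (use T c l0 in auto)
  have E0: "E \<ge> 0" by (rule has_integral_nonneg[OF ex]) (use l0 in auto)
  have "(\<integral>\<^sup>+x. ennreal (exp (-(c*x)) / (2*l)) * indicator {T..y} x \<partial>lborel) = ennreal E"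
    by (rule nn_integral_has_integral_lebesgue'[OF _ ex]) (use l0 in auto)
  moreover have "(\<integral>\<^sup>+x. ennreal (exp (-(c*x)) / (2*l) * indicator {T..y} x) \<partial>lborel)
      = (\<integral>\<^sup>+x. ennreal (exp (-(c*x)) / (2*l)) * indicator {T..y} x \<partial>lborel)"
    by (intro nn_integral_cong) (auto simp: indicator_def)
  ultimately have h_int: "(\<integral>\<^sup>+x. ennreal (exp (-(c*x)) / (2*l) * indicator {T..y} x) \<partial>lborel) = ennreal E" by simp
  have hm: "(\<lambda>x. exp (-(c*x)) / (2*l) * indicator {T..y} x) \<in> borel_measurable borel"
  proof (rule borel_measurable_times)
    show "(\<lambda>x. exp (- (c * x)) / (2 * l)) \<in> borel_measurable borel"
      using l0 by (intro borel_measurable_continuous_onI continuous_intros) auto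
    show "(\<lambda>x. indicator {T..y} x :: real) \<in> borel_measurable borel" by simp
  qed
  have pw: "norm (U' x) * indicator {T..y} x \<le> l * max (ig W c U U' x) 0 + exp (-(c*x)) / (2*l) * indicator {T..y} x" for x
  proof (cases "x \<in> {T..y}")
    case True
    then have xL: "x \<ge> L" using T by auto
    define q where "q = l * exp (c*x)"
    have q0: "q > 0" unfolding q_def using l0 by simp
    have "norm (U' x) \<le> q * (norm (U' x))\<^sup>2 / 2 + 1 / (2*q)" by (rule amgm[OF q0])
    also have "q * (norm (U' x))\<^sup>2 / 2 = l * (1/2 * (norm (U' x))\<^sup>2 * exp (c*x))" unfolding q_def by simp
    also have "1/2 * (norm (U' x))\<^sup>2 * exp (c*x) \<le> max (ig W c U U' x) 0"
      using nonneg[OF xL] unfolding ig_def by (simp add: algebra_simps)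
    also have "1 / (2*q) = exp (-(c*x)) / (2*l)" unfolding q_def by (simp add: exp_minus field_simps)
    finally show ?thesis using True l0 by (simp add: mult_left_mono)
  next
    case False
    then have "indicator {T..y} x = (0::real)" by simp
    moreover have "0 \<le> l * max (ig W c U U' x) 0" using l0 by simp
    ultimately show ?thesis by simp
  qed
  have "(\<integral>\<^sup>+x. ennreal (norm (U' x) * indicator {T..y} x) \<partial>lborel) \<le>
      ennreal l * (\<integral>\<^sup>+x. ennreal (ig W c U U' x) \<partial>lborel) + (\<integral>\<^sup>+x. ennreal (exp (-(c*x)) / (2*l) * indicator {T..y} x) \<partial>lborel)"
    by (rule nn_le_lemma[OF ig_meas[OF wd Wc] hm _ _ pw]) (use l0 in \<open>auto simp: indicator_def\<close>)
  then have "ennreal I \<le> ennreal (l * P) + ennreal E"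
    unfolding u_int h_int P using l0 P0 E0 by (simp add: ennreal_mult ennreal_plus)
  also have "\<dots> = ennreal (l * P + E)" using l0 P0 E0 by (intro ennreal_plus[symmetric]) auto
  finally have e: "ennreal I \<le> ennreal (l * P + E)" .
  have lpe: "0 \<le> l * P + E" using l0 P0 E0 by simp
  have "I \<le> l * P + E" using e ennreal_le_iff[OF lpe] by blast
  moreover have "E \<le> l / (2*c)"
  proof -
    have "E \<le> exp (-(c*T)) / ((2*l)*c)" unfolding E_def using l0 c by (intro divide_right_mono) auto
    also have "exp (-(c*T)) = l * l" unfolding l_def by (simp flip: exp_add)
    finally show ?thesis using l0 c by (simp add: field_simps)
  qed
  ultimately show ?thesis using n1 unfolding l_def by (simp add: algebra_simps)
qed



lemma radial_pos:
  fixes W :: "'a::euclidean_space \<Rightarrow> real"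
  assumes deriv: "\<And>x. (W has_derivative (\<lambda>h. G x \<bullet> h)) (at x)"
    and h: "\<And>r \<xi>. 0 < r \<Longrightarrow> r < R0 \<Longrightarrow> norm \<xi> = 1 \<Longrightarrow> G (ap + r *\<^sub>R \<xi>) \<bullet> \<xi> > 0"
    and p: "norm (p - ap) < R0" "p \<noteq> ap"
  shows "W p > W ap"
proof -
  define r where "r = norm (p - ap)"
  have r0: "r > 0" using p unfolding r_def by simp
  define \<xi> where "\<xi> = (1/r) *\<^sub>R (p - ap)"
  have n\<xi>: "norm \<xi> = 1" unfolding \<xi>_def r_def using r0 r_def by simp
  have pr: "ap + r *\<^sub>R \<xi> = p" unfolding \<xi>_def using r0 by simp
  define \<phi> where "\<phi> s = W (ap + s *\<^sub>R \<xi>)" for s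
  have D: "(\<phi> has_field_derivative (G (ap + s *\<^sub>R \<xi>) \<bullet> \<xi>)) (at s)" for s
  proof -
    have l: "((\<lambda>s. ap + s *\<^sub>R \<xi>) has_derivative (\<lambda>t. t *\<^sub>R \<xi>)) (at s)"
      by (intro derivative_eq_intros) auto
    have "(\<phi> has_derivative (\<lambda>t. G (ap + s *\<^sub>R \<xi>) \<bullet> (t *\<^sub>R \<xi>))) (at s)"
      unfolding \<phi>_def using has_derivative_compose[OF l deriv] by (simp add: o_def)
    moreover have "(\<lambda>t. G (ap + s *\<^sub>R \<xi>) \<bullet> (t *\<^sub>R \<xi>)) = (\<lambda>t. (G (ap + s *\<^sub>R \<xi>) \<bullet> \<xi>) * t)"
      by (auto simp: mult.commute)
    ultimately show ?thesis by (simp add: has_field_derivative_def)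
  qed
  have cont: "continuous_on {0..r} \<phi>"
    using D by (meson DERIV_continuous continuous_at_imp_continuous_on)
  have "\<exists>l z. 0 < z \<and> z < r \<and> (\<phi> has_real_derivative l) (at z) \<and> \<phi> r - \<phi> 0 = (r - 0) * l"
    by (rule MVT[OF r0 cont]) (use D real_differentiable_def in blast)
  then obtain l z where z: "0 < z" "z < r" and Dz: "(\<phi> has_real_derivative l) (at z)" and eq: "\<phi> r - \<phi> 0 = r * l"
    by auto
  have "l = G (ap + z *\<^sub>R \<xi>) \<bullet> \<xi>" using DERIV_unique[OF Dz D] .
  moreover have "G (ap + z *\<^sub>R \<xi>) \<bullet> \<xi> > 0" using h[OF z(1) _ n\<xi>] z p unfolding r_def by simp
  ultimately have "\<phi> r - \<phi> 0 > 0" using eq r0 by simp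
  then show ?thesis unfolding \<phi>_def using pr by simp
qed

lemma conv_ap:
  fixes U U' :: "real \<Rightarrow> 'a::euclidean_space" and W :: "'a \<Rightarrow> real"
  assumes wd: "weak_deriv U U'" and Wc: "continuous_on UNIV W" and c: "c > 0"
    and deriv: "\<And>x. (W has_derivative (\<lambda>h. G x \<bullet> h)) (at x)"
    and h: "\<And>r \<xi>. 0 < r \<Longrightarrow> r < R0 \<Longrightarrow> norm \<xi> = 1 \<Longrightarrow> G (ap + r *\<^sub>R \<xi>) \<bullet> \<xi> > 0"
    and r0: "r0 < R0" and Wap: "W ap = 0" and r0p: "\<forall>u\<in>cball ap r0. W u \<ge> 0"
    and near: "\<And>x. x \<ge> L \<Longrightarrow> norm (U x - ap) \<le> r0"
    and P: "(\<integral>\<^sup>+x. ennreal (ig W c U U' x) \<partial>lborel) = ennreal P" and P0: "P \<ge> 0"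
  shows "(U \<longlongrightarrow> ap) at_top"
proof -
  have inb: "U x \<in> cball ap r0" if "x \<ge> L" for x
    using near[OF that] by (simp add: dist_norm norm_minus_commute)
  have nonneg: "W (U x) \<ge> 0" if "x \<ge> L" for x using r0p inb[OF that] by blast
  have "\<exists>p. (U \<longlongrightarrow> p) at_top"
  proof (rule conv_from_bound[OF c, where M=L and B="P + 1/(2*c)"])
    fix T y assume "L \<le> T" "T \<le> y"
    then show "dist (U y) (U T) \<le> (P + 1/(2*c)) * exp (-(c*T/2))"
      using tail_bound[OF wd Wc c nonneg P P0] by (simp add: dist_norm mult.commute)
  qed
  then obtain p where p: "(U \<longlongrightarrow> p) at_top" by blast
  have ev: "\<forall>\<^sub>F x in at_top. U x \<in> cball ap r0"
    unfolding eventually_at_top_linorder using inb by blast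
  have pin: "p \<in> cball ap r0"
    by (rule Lim_in_closed_set[OF closed_cball ev _ p]) simp
  have Wp0: "W p \<ge> 0" using r0p pin by blast
  have WU: "((\<lambda>x. W (U x)) \<longlongrightarrow> W p) at_top"
    using Wc p by (metis UNIV_I continuous_on_def isCont_tendsto_compose continuous_on_eq_continuous_at open_UNIV)
  have Wp: "W p = 0"
  proof (rule ccontr)
    assume "W p \<noteq> 0"
    then have wp: "W p > 0" using Wp0 by simp
    have "\<forall>\<^sub>F x in at_top. W p / 2 < W (U x)" using order_tendstoD(1)[OF WU, of "W p / 2"] wp by linarith
    then obtain M0 where M0: "\<And>x. x \<ge> M0 \<Longrightarrow> W p / 2 < W (U x)"
      unfolding eventually_at_top_linorder by blast
    define M where "M = max M0 0"
    define n where "n = 2 * P / W p + 1"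
    have n0: "n > 0" unfolding n_def using P0 wp by (simp add: field_simps)
    have "ennreal (W p / 2) * emeasure lborel {M..M+n} = (\<integral>\<^sup>+x. ennreal (W p / 2) * indicator {M..M+n} x \<partial>lborel)"
      by (simp add: nn_integral_cmult_indicator)
    also have "\<dots> \<le> (\<integral>\<^sup>+x. ennreal (ig W c U U' x) \<partial>lborel)"
    proof (intro nn_integral_mono)
      fix x
      show "ennreal (W p / 2) * indicator {M..M+n} x \<le> ennreal (ig W c U U' x)"
      proof (cases "x \<in> {M..M+n}")
        case True
        then have x: "x \<ge> M0" "x \<ge> 0" unfolding M_def by auto
        have "W p / 2 \<le> W (U x)" using M0[OF x(1)] by simp
        also have "W (U x) \<le> W (U x) * exp (c*x)"
          using wp M0[OF x(1)] x c by (simp add: mult_le_cancel_left1)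
        also have "\<dots> \<le> ig W c U U' x" unfolding ig_def by (simp add: algebra_simps)
        finally show ?thesis using True by (simp add: ennreal_leI)
      qed simp
    qed
    also have "\<dots> = ennreal P" by (rule P)
    finally have f1: "ennreal (W p / 2) * ennreal n \<le> ennreal P" using n0 by simp
    have "ennreal (W p / 2 * n) = ennreal (W p / 2) * ennreal n" using n0 wp by (intro ennreal_mult) auto
    then have "ennreal (W p / 2 * n) \<le> ennreal P" using f1 by simp
    then have "W p / 2 * n \<le> P" using P0 by (simp add: ennreal_le_iff)
    moreover have "W p / 2 * n = P + W p / 2" unfolding n_def using wp by (simp add: field_simps)
    ultimately show False using wp by simp
  qed
  have "p = ap"
  proof (rule ccontr)
    assume ne: "p \<noteq> ap"
    have "norm (p - ap) < R0" using pin r0 by (simp add: dist_norm norm_minus_commute)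
    then have "W p > W ap" using radial_pos[where W=W and G=G and ap=ap and p=p] deriv h ne by blast
    then show False using Wp Wap by simp
  qed
  then show ?thesis using p by simp
qed



lemma ereal_neg1: "enn2ereal a - enn2ereal b < 0 \<Longrightarrow> a < b"
  by (meson ereal_diff_positive leD leI less_ennreal.rep_eq)

lemma ereal_neg2: "(a::ennreal) < b \<Longrightarrow> enn2ereal a - enn2ereal b < 0"
  by (metis Infty_neq_0(3) abs_ereal_ge0 add_0 enn2ereal_nonneg
    ereal_diff_eq_MInfty_iff ereal_minus_less less_ennreal.rep_eq
    less_ereal.simps(2,3) linorder_less_linear)

lemma ind_int: fixes a k :: real assumes "k \<ge> 0"
  shows "(\<integral>\<^sup>+x. ennreal (k * indicator {a-1..a} x) \<partial>lborel) = ennreal k"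
proof -
  have "(\<integral>\<^sup>+x. ennreal (k * indicator {a-1..a} x) \<partial>lborel) = (\<integral>\<^sup>+x. ennreal k * indicator {a-1..a} x \<partial>lborel)"
    by (intro nn_integral_cong) (auto simp: indicator_def)
  also have "\<dots> = ennreal k * emeasure lborel {a-1..a}" by (rule nn_integral_cmult_indicator) simp
  also have "\<dots> = ennreal k" by simp
  finally show ?thesis .
qed

lemma ind_meas: "(\<lambda>x. (k::real) * indicator {(a::real)-1..a} x) \<in> borel_measurable borel"
  by (intro borel_measurable_times borel_measurable_const borel_measurable_indicator) auto



lemma main_constr:
  fixes W :: "'a::euclidean_space \<Rightarrow> real" and U U' :: "real \<Rightarrow> 'a"
  assumes Wc: "continuous_on UNIV W"
    and deriv: "\<And>x. (W has_derivative (\<lambda>h. G x \<bullet> h)) (at x)"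
    and h: "\<And>r \<xi>. 0 < r \<Longrightarrow> r < R0 \<Longrightarrow> norm \<xi> = 1 \<Longrightarrow> G (ap + r *\<^sub>R \<xi>) \<bullet> \<xi> > 0"
    and min_m: "\<forall>u. W am \<le> W u" and Wap: "W ap = 0"
    and r0: "0 < r0" "r0 < R0"
    and r0p: "\<forall>u\<in>cball ap r0. W u \<ge> 0" and r0m: "\<forall>u\<in>cball am r0. W u < 0"
    and c: "c > 0" and UX: "U \<in> XL am ap r0 L" and wd: "weak_deriv U U'"
    and en: "energy W c U U' < 0"
  shows "\<exists>V V'. V \<in> Xinf am ap \<and> weak_deriv V V' \<and> energy W c V V' < 0"
proof -
  have nearp: "\<And>x. x \<ge> L \<Longrightarrow> norm (U x - ap) \<le> r0" and nearm: "\<And>x. x \<le> -L \<Longrightarrow> norm (U x - am) \<le> r0"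
    using UX unfolding XL_def by auto
  define f where "f = ig W c U U'"
  define Pf where "Pf = (\<integral>\<^sup>+x. ennreal (f x) \<partial>lborel)"
  define Nf where "Nf = (\<integral>\<^sup>+x. ennreal (- f x) \<partial>lborel)"
  have PN: "Pf < Nf" using en ereal_neg1 unfolding energy_ig Pf_def Nf_def f_def by blast
  have "Pf \<noteq> top" using PN by (metis less_le_not_le top_greatest)
  then obtain P where P: "Pf = ennreal P" and P0: "P \<ge> 0" by (cases Pf) auto
  have Uap: "(U \<longlongrightarrow> ap) at_top"
    by (rule conv_ap[OF wd Wc c deriv h r0(2) Wap r0p nearp P[unfolded Pf_def f_def] P0])
  obtain z where z: "Pf < z" "z < Nf" using dense[OF PN] by blast
  have "z \<noteq> top" using z(2) by (metis less_le_not_le top_greatest)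
  then obtain zr where zr: "z = ennreal zr" "zr \<ge> 0" by (cases z) auto
  define \<delta> where "\<delta> = zr - P"
  have "ennreal P < ennreal zr" using z(1) P zr by simp
  then have "P < zr" using ennreal_less_iff[OF P0] by blast
  then have \<delta>0: "\<delta> > 0" unfolding \<delta>_def by simp
  have P\<delta>: "Pf + ennreal \<delta> = z" unfolding P zr \<delta>_def using P0 \<open>P < zr\<close>
    by (simp flip: ennreal_plus)
  have Wam0: "W am < 0" using r0m r0 by auto
  define K where "K = r0\<^sup>2/2 - W am"
  have K0: "K > 0" unfolding K_def using Wam0 zero_le_power2[of r0] by linarith
  define T where "T = min (-L) (ln (\<delta>/K) / c)"
  have TL: "T \<le> -L" unfolding T_def by simp
  have "c * T \<le> ln (\<delta>/K)" unfolding T_def using c by (simp add: min_def field_simps)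
  then have "exp (c*T) \<le> \<delta>/K" using \<delta>0 K0 by (metis exp_le_cancel_iff exp_ln divide_pos_pos)
  then have eT: "exp (c*T) * K \<le> \<delta>" using K0 by (simp add: field_simps)
  define d where "d = U T - am"
  have nd: "norm d \<le> r0" using nearm[OF TL] unfolding d_def .
  define V where "V x = (if x \<le> T-1 then am else if x \<le> T then am + (x-(T-1)) *\<^sub>R d else U x)" for x
  define V' where "V' x = (if x < T-1 then 0 else if x < T then d else U' x)" for x
  have VU: "V x = U x" if "x \<ge> T" for x
    using that unfolding V_def d_def by (cases "x = T") auto
  have V'U: "V' x = U' x" if "x \<ge> T" for x using that unfolding V'_def by auto
  have Vlin: "V x = am + (x-(T-1)) *\<^sub>R d" if "T-1 \<le> x" "x \<le> T" for x
    using that unfolding V_def by (cases "x \<le> T-1") auto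
  have Vin: "V x \<in> cball am r0" if "T-1 \<le> x" "x \<le> T" for x
  proof -
    have "dist am (V x) = \<bar>x-(T-1)\<bar> * norm d" using Vlin[OF that] by (simp add: dist_norm)
    also have "\<dots> \<le> 1 * r0" using that nd by (intro mult_mono) auto
    finally show ?thesis by simp
  qed
  have w1: "wd_on (UNIV \<inter> {..T} \<inter> {..T-1}) V (\<lambda>x. 0)"
    by (rule wd_on_const[where k=am]) (auto simp: V_def)
  have w2: "wd_on (UNIV \<inter> {..T} \<inter> {T-1..}) V (\<lambda>x. d)"
  proof (rule wd_on_lin[where p="am - (T-1) *\<^sub>R d"])
    fix x assume "x \<in> UNIV \<inter> {..T} \<inter> {T-1..}"
    then show "V x = am - (T - 1) *\<^sub>R d + x *\<^sub>R d" using Vlin[of x] by (auto simp: algebra_simps)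
  qed
  have w12: "wd_on (UNIV \<inter> {..T}) V (\<lambda>x. if x < T-1 then 0 else d)"
    by (rule wd_glue[OF w1 w2]) auto
  have "wd_on UNIV U U'" using wd wd_on_UNIV by blast
  then have "wd_on (UNIV \<inter> {T..}) U U'" by (rule wd_on_mono) auto
  then have w3: "wd_on (UNIV \<inter> {T..}) V U'" by (rule wd_on_cong) (use VU in auto)
  have "wd_on UNIV V V'" by (rule wd_glue[OF w12 w3]) (auto simp: V'_def)
  then have wdV: "weak_deriv V V'" using wd_on_UNIV by blast
  have "(V \<longlongrightarrow> ap) at_top"
  proof (rule Lim_transform_eventually[OF Uap])
    show "\<forall>\<^sub>F x in at_top. U x = V x"
      unfolding eventually_at_top_linorder using VU by (intro exI[of _ T]) auto
  qed
  moreover have "(V \<longlongrightarrow> am) at_bot"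
  proof (rule tendsto_eventually)
    show "\<forall>\<^sub>F x in at_bot. V x = am"
      unfolding eventually_at_bot_linorder by (intro exI[of _ "T-1"]) (auto simp: V_def)
  qed
  ultimately have VX: "V \<in> Xinf am ap" unfolding Xinf_def H1loc_def using wdV by blast
  define g where "g = ig W c V V'"
  define Pg where "Pg = (\<integral>\<^sup>+x. ennreal (g x) \<partial>lborel)"
  define Ng where "Ng = (\<integral>\<^sup>+x. ennreal (- g x) \<partial>lborel)"
  have fm: "f \<in> borel_measurable lebesgue" unfolding f_def by (rule ig_meas[OF wd Wc])
  have gm: "g \<in> borel_measurable lebesgue" unfolding g_def by (rule ig_meas[OF wdV Wc])
  have gnm: "(\<lambda>x. - g x) \<in> borel_measurable lebesgue" using borel_measurable_uminus[OF gm] .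
  define K1 where "K1 = r0\<^sup>2/2 * exp (c*T)"
  define K2 where "K2 = - W am * exp (c*T)"
  have K10: "K1 \<ge> 0" unfolding K1_def by simp
  have K20: "K2 \<ge> 0" unfolding K2_def using Wam0 by (intro mult_nonneg_nonneg) auto
  have K12: "K1 + K2 \<le> \<delta>" using eT unfolding K1_def K2_def K_def by (simp add: algebra_simps)
  have indn: "\<And>K S x. K \<ge> 0 \<Longrightarrow> 0 \<le> K * (indicator S x :: real)" by simp
  have kin: "0 \<le> 1/2 * (norm v)\<^sup>2 * exp (c*x)" for v :: 'a and x :: real by simp
  have pw1: "g x \<le> 1 * max (f x) 0 + K1 * indicator {T-1..T} x" for x
  proof -
    consider "x \<ge> T" | "T-1 \<le> x" "x < T" | "x < T-1" by linarith
    then show ?thesis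
    proof cases
      case 1
      then have "g x = f x" unfolding g_def f_def ig_def using VU V'U by simp
      then show ?thesis using indn[OF K10, of "{T-1..T}" x] max.cobounded1[of "f x" 0] by simp
    next
      case 2
      have WV: "W (V x) < 0" using r0m Vin[of x] 2 by auto
      have "g x = (1/2 * (norm d)\<^sup>2 + W (V x)) * exp (c*x)" unfolding g_def ig_def V'_def using 2 by simp
      also have "\<dots> \<le> (1/2 * (norm d)\<^sup>2) * exp (c*x)" using WV by (intro mult_right_mono) auto
      also have "\<dots> \<le> (r0\<^sup>2/2) * exp (c*T)"
      proof (intro mult_mono)
        show "1/2 * (norm d)\<^sup>2 \<le> r0\<^sup>2/2" using nd power_mono[OF nd, of 2] by simp
        show "exp (c*x) \<le> exp (c*T)" using 2 c by simp
      qed auto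
      finally have "g x \<le> K1" unfolding K1_def .
      moreover have "indicator {T-1..T} x = (1::real)" using 2 by simp
      ultimately show ?thesis using max.cobounded2[of 0 "f x"] by simp
    next
      case 3
      have "g x = W am * exp (c*x)" unfolding g_def ig_def V'_def V_def using 3 by simp
      also have "\<dots> < 0" using Wam0 by (simp add: mult_neg_pos)
      finally show ?thesis using indn[OF K10, of "{T-1..T}" x] max.cobounded2[of 0 "f x"] by simp
    qed
  qed
  have pw2: "- f x \<le> 1 * max (- g x) 0 + K2 * indicator {T-1..T} x" for x
  proof -
    have fW: "- f x \<le> - W am * exp (c*x)"
    proof -
      have "- f x = - (1/2 * (norm (U' x))\<^sup>2 * exp (c*x)) - W (U x) * exp (c*x)"
        unfolding f_def ig_def by (simp add: algebra_simps)
      also have "\<dots> \<le> - W (U x) * exp (c*x)" using kin[of "U' x" x] by simp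
      also have "\<dots> \<le> - W am * exp (c*x)" using min_m by simp
      finally show ?thesis .
    qed
    consider "x \<ge> T" | "T-1 \<le> x" "x < T" | "x < T-1" by linarith
    then show ?thesis
    proof cases
      case 1
      then have "g x = f x" unfolding g_def f_def ig_def using VU V'U by simp
      then show ?thesis using indn[OF K20, of "{T-1..T}" x] max.cobounded1[of "- g x" 0] by simp
    next
      case 2
      have "- f x \<le> - W am * exp (c*T)" using fW 2 c Wam0 by (smt (verit) exp_le_cancel_iff mult_le_cancel_left mult_left_mono)
      moreover have "indicator {T-1..T} x = (1::real)" using 2 by simp
      ultimately show ?thesis using max.cobounded2[of 0 "- g x"] unfolding K2_def by simp
    next
      case 3
      have "g x = W am * exp (c*x)" unfolding g_def ig_def V'_def V_def using 3 by simp
      then show ?thesis using fW indn[OF K20, of "{T-1..T}" x] max.cobounded1[of "- g x" 0] by simp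
    qed
  qed
  have "Pg \<le> ennreal 1 * Pf + (\<integral>\<^sup>+x. ennreal (K1 * indicator {T-1..T} x) \<partial>lborel)"
    unfolding Pg_def Pf_def by (rule nn_le_lemma[OF fm ind_meas _ _ pw1]) (use indn[OF K10] in auto)
  then have I1: "Pg \<le> Pf + ennreal K1" using ind_int[OF K10, of T] by simp
  have "Nf \<le> ennreal 1 * Ng + (\<integral>\<^sup>+x. ennreal (K2 * indicator {T-1..T} x) \<partial>lborel)"
    unfolding Ng_def Nf_def by (rule nn_le_lemma[OF gnm ind_meas _ _ pw2]) (use indn[OF K20] in auto)
  then have I2: "Nf \<le> Ng + ennreal K2" using ind_int[OF K20, of T] by simp
  have "ennreal K2 + Pg \<le> Pf + ennreal (K1 + K2)"
    using I1 K10 K20 by (simp add: ennreal_plus add.commute add.left_commute add_right_mono)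
  also have "\<dots> \<le> Pf + ennreal \<delta>" using K12 by (intro add_left_mono ennreal_leI)
  also have "\<dots> < Nf" using P\<delta> z by simp
  also have "\<dots> \<le> ennreal K2 + Ng" using I2 by (simp add: add.commute)
  finally have "Pg < Ng" by (simp add: ennreal_add_left_cancel_less)
  then have "energy W c V V' < 0" unfolding energy_ig using ereal_neg2 unfolding Pg_def Ng_def g_def by blast
  then show ?thesis using VX wdV by blast
qed



theorem mainTheorem15:
  fixes W :: "'a::euclidean_space \<Rightarrow> real" and G :: "'a \<Rightarrow> 'a" and H :: "'a \<Rightarrow> 'a \<Rightarrow>\<^sub>L 'a"
    and am ap :: 'a and R0 r0 :: real
  assumes C2: "C2_on UNIV W G H"
    and min_m: "\<forall>u. W am \<le> W u"
    and min_p: "\<exists>\<epsilon>>0. \<forall>u\<in>ball ap \<epsilon>. W ap \<le> W u"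
    and Wam: "W am < 0" and Wap: "W ap = 0"
    and hstar_sets: "\<exists>\<alpha>0>0. \<exists>Cm Cp :: real \<Rightarrow> 'a set.
         (\<forall>\<alpha>\<in>{0<..\<alpha>0}.
            {u. W u = \<alpha>} = frontier (Cm \<alpha>) \<union> frontier (Cp \<alpha>) \<and>
            {u. W u \<le> \<alpha>} = Cm \<alpha> \<union> Cp \<alpha> \<and> Cm \<alpha> \<inter> Cp \<alpha> = {} \<and>
            compact (Cm \<alpha>) \<and> compact (Cp \<alpha>) \<and> convex (Cm \<alpha>) \<and> convex (Cp \<alpha>) \<and>
            C2_boundary (Cm \<alpha>) \<and> C2_boundary (Cp \<alpha>) \<and> am \<in> Cm \<alpha> \<and> ap \<in> Cp \<alpha>) \<and>
         (\<forall>r \<xi>. r > 0 \<longrightarrow> norm \<xi> = 1 \<longrightarrow> am + r *\<^sub>R \<xi> \<in> Cm \<alpha>0 \<longrightarrow> G (am + r *\<^sub>R \<xi>) \<bullet> \<xi> > 0)"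
    and hstar_C0: "\<exists>c0>0. \<forall>p\<in>frontier (connected_component_set {u. W u \<le> 0} am).
         (\<exists>n. outward_normal (connected_component_set {u. W u \<le> 0} am) p n) \<and>
         (\<forall>n. outward_normal (connected_component_set {u. W u \<le> 0} am) p n \<longrightarrow> G p \<bullet> n \<ge> c0) \<and>
         (\<forall>\<xi>. \<xi> \<bullet> blinfun_apply (H p) \<xi> \<ge> c0 * (norm \<xi>)\<^sup>2)"
    and R0: "R0 > 0"
    and h: "\<forall>r \<xi>. 0 < r \<longrightarrow> r < R0 \<longrightarrow> norm \<xi> = 1 \<longrightarrow>
              G (am + r *\<^sub>R \<xi>) \<bullet> \<xi> > 0 \<and> G (ap + r *\<^sub>R \<xi>) \<bullet> \<xi> > 0"
    and r0: "0 < r0" "r0 < R0"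
    and r0p: "\<forall>u\<in>cball ap r0. W u \<ge> 0"
    and r0m: "\<forall>u\<in>cball am r0. W u < 0"
  shows "Sup (ereal ` {c. c > 0 \<and> (\<exists>L\<ge>1. Inf (energies W c (XL am ap r0 L)) < 0)})
       = Sup (ereal ` {c. c > 0 \<and> Inf (energies W c (Xinf am ap)) < 0})"
proof -
  have Wc: "continuous_on UNIV W" using W_cont[OF C2] .
  have deriv: "\<And>x. (W has_derivative (\<lambda>h. G x \<bullet> h)) (at x)" using C2 unfolding C2_on_def by blast
  have hp: "\<And>r \<xi>. 0 < r \<Longrightarrow> r < R0 \<Longrightarrow> norm \<xi> = 1 \<Longrightarrow> G (ap + r *\<^sub>R \<xi>) \<bullet> \<xi> > 0" using h by blast
  have S1: "Inf (energies W c (Xinf am ap)) < 0" if c: "c > 0" and L: "Inf (energies W c (XL am ap r0 L)) < 0" for c L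
  proof -
    obtain e where e: "e \<in> energies W c (XL am ap r0 L)" "e < 0" using L Inf_less_iff by blast
    then obtain U U' where U: "e = energy W c U U'" "U \<in> XL am ap r0 L" "weak_deriv U U'"
      unfolding energies_def by blast
    have "energy W c U U' < 0" using U e by simp
    from main_constr[OF Wc deriv hp min_m Wap r0 r0p r0m c U(2) U(3) this]
    obtain V V' where V: "V \<in> Xinf am ap" "weak_deriv V V'" "energy W c V V' < 0" by blast
    then have "energy W c V V' \<in> energies W c (Xinf am ap)" unfolding energies_def by blast
    then have "Inf (energies W c (Xinf am ap)) \<le> energy W c V V'" by (rule Inf_lower)
    then show ?thesis using V(3) by simp
  qed
  have S2: "\<exists>L\<ge>1. Inf (energies W c (XL am ap r0 L)) < 0" if L: "Inf (energies W c (Xinf am ap)) < 0" for c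
  proof -
    obtain e where e: "e \<in> energies W c (Xinf am ap)" "e < 0" using L Inf_less_iff by blast
    then obtain U U' where U: "e = energy W c U U'" "U \<in> Xinf am ap" "weak_deriv U U'"
      unfolding energies_def by blast
    have t1: "(U \<longlongrightarrow> ap) at_top" and t2: "(U \<longlongrightarrow> am) at_bot" and H: "H1loc U"
      using U(2) unfolding Xinf_def by auto
    have "\<forall>\<^sub>F x in at_top. dist (U x) ap < r0" using t1 r0(1) tendsto_iff by blast
    then obtain M1 where M1: "\<And>x. x \<ge> M1 \<Longrightarrow> dist (U x) ap < r0"
      unfolding eventually_at_top_linorder by blast
    have "\<forall>\<^sub>F x in at_bot. dist (U x) am < r0" using t2 r0(1) tendsto_iff by blast
    then obtain M2 where M2: "\<And>x. x \<le> M2 \<Longrightarrow> dist (U x) am < r0"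
      unfolding eventually_at_bot_linorder by blast
    define L where "L = max 1 (max M1 (-M2))"
    have "U \<in> XL am ap r0 L" unfolding XL_def
    proof (intro CollectI conjI allI impI H)
      fix x assume "x \<ge> L" then have "x \<ge> M1" unfolding L_def by simp
      then show "norm (U x - ap) \<le> r0" using M1[of x] by (simp add: dist_norm)
    next
      fix x assume "x \<le> -L" then have "x \<le> M2" unfolding L_def by simp
      then show "norm (U x - am) \<le> r0" using M2[of x] by (simp add: dist_norm)
    qed
    then have "e \<in> energies W c (XL am ap r0 L)" using U unfolding energies_def by blast
    then have "Inf (energies W c (XL am ap r0 L)) \<le> e" by (rule Inf_lower)
    moreover have "L \<ge> 1" unfolding L_def by simp
    ultimately show ?thesis using e(2) by force
  qed
  have "{c. c > 0 \<and> (\<exists>L\<ge>1. Inf (energies W c (XL am ap r0 L)) < 0)}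
      = {c. c > 0 \<and> Inf (energies W c (Xinf am ap)) < 0}"
    using S1 S2 by blast
  then show ?thesis by simp
qed


end
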